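(* Let $n\ge3$, let $\mathcal{M}\subseteq\{1,\dots,n\}$ be a sample set with sampling matrix $A=\mathbf{I}_{\mathcal{M}}$, let $y\in\mathbb{R}^{|\mathcal{M}|}$ (indexed by $\mathcal{M}$) be measurements of the form $y=Az^\diamond+\eta$ with $\|\eta\|_\infty\le\varepsilon$ and $\varepsilon>0$. Let $z\in\mathbb{R}^n$ be feasible for $\min_{z'}\|Dz'\|_1$ subject to $\|Az'-y\|_\infty\le\varepsilon$. Define the active set $\mathcal{A}=\{i\in\mathcal{M}: |y_i-z_i|=\varepsilon\}$, its subsets $\mathcal{A}_\uparrow=\{i\in\mathcal{M}: y_i-z_i=\varepsilon\}$ and $\mathcal{A}_\downarrow=\{i\in\mathcal{M}: y_i-z_i=-\varepsilon\}$, and $\bar{\mathcal{A}}=\mathcal{M}\setminus\mathcal{A}$. Then $z$ is a minimizer of this problem if and only if there exists $u\in\mathbb{R}^{n-2}$ such that $$(D^{\mathsf{T}})_{\overline{\mathcal{M}}\cup\bar{\mathcal{A}}}\,u=\mathbf{0},\quad u_{\mathcal{I}}=\mathrm{sign}(Dz)_{\mathcal{I}},\quad \|u\|_\infty\le1,\quad (D^{\mathsf{T}})_{\mathcal{A}_\uparrow}u\ge\mathbf{0},\quad (D^{\mathsf{T}})_{\mathcal{A}_\downarrow}u\le\mathbf{0},$$ where $\mathcal{I}$ is the set of indices of the nonzero entries of $Dz$ and $\overline{\mathcal{M}}=\{1,\dots,n\}\setminus\mathcal{M}$ (inequalities entrywise).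
   Context: $D\in\mathbb{R}^{(n-2)\times n}$ is the second-order difference operator with $k$-th row having entries $1,-2,1$ in columns $k,k+1,k+2$. $\mathbf{I}_{\mathcal{M}}$ consists of the rows of the identity indexed by $\mathcal{M}$, so $Az=z_{\mathcal{M}}$. For a matrix $M$ and index set $\mathcal{S}$, $M_{\mathcal{S}}$ denotes the rows of $M$ indexed by $\mathcal{S}$; $v_{\mathcal{S}}$ denotes the subvector of $v$. $\mathrm{sign}$ is entrywise with $\mathrm{sign}(0)=0$. *)

theory Defs
  imports Complex_Main
begin

text \<open>Vectors in R^n are functions nat => real, indexed 1..n (1-based as in the paper).
  The second-order difference operator D has rows k = 1..n-2, with entries 1,-2,1
  in columns k, k+1, k+2.\<close>

definition Dent :: "nat \<Rightarrow> nat \<Rightarrow> real" where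
  "Dent k j = (if j = k then 1 else if j = k + 1 then -2 else if j = k + 2 then 1 else 0)"

definition Dmul :: "nat \<Rightarrow> (nat \<Rightarrow> real) \<Rightarrow> nat \<Rightarrow> real" where
  "Dmul n z k = (\<Sum>j = 1..n. Dent k j * z j)"

definition DTmul :: "nat \<Rightarrow> (nat \<Rightarrow> real) \<Rightarrow> nat \<Rightarrow> real" where
  "DTmul n u j = (\<Sum>k = 1..n - 2. Dent k j * u k)"

definition tv_obj :: "nat \<Rightarrow> (nat \<Rightarrow> real) \<Rightarrow> real" where
  "tv_obj n z = (\<Sum>k = 1..n - 2. \<bar>Dmul n z k\<bar>)"

definition feasible :: "nat set \<Rightarrow> (nat \<Rightarrow> real) \<Rightarrow> real \<Rightarrow> (nat \<Rightarrow> real) \<Rightarrow> bool" where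
  "feasible M y \<epsilon> z \<longleftrightarrow> (\<forall>i\<in>M. \<bar>z i - y i\<bar> \<le> \<epsilon>)"

definition is_minimizer :: "nat \<Rightarrow> nat set \<Rightarrow> (nat \<Rightarrow> real) \<Rightarrow> real \<Rightarrow> (nat \<Rightarrow> real) \<Rightarrow> bool" where
  "is_minimizer n M y \<epsilon> z \<longleftrightarrow> feasible M y \<epsilon> z \<and>
     (\<forall>z'. feasible M y \<epsilon> z' \<longrightarrow> tv_obj n z \<le> tv_obj n z')"

end

theory Submission
  imports Defs "HOL-Analysis.Analysis"
begin


lemma sum_Dmul_swap: "(\<Sum>k=1..n-2. v k * Dmul n r k) = (\<Sum>j=1..n. r j * DTmul n v j)"
  unfolding Dmul_def DTmul_def
  apply (simp add: sum_distrib_left mult_ac)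
  apply (rule sum.swap)
  done

lemma Dmul_lin: "Dmul n (\<lambda>j. a j + t * b j) k = Dmul n a k + t * Dmul n b k"
  unfolding Dmul_def by (simp add: sum.distrib sum_distrib_left algebra_simps)

lemma Dmul_diff: "Dmul n (\<lambda>j. a j - b j) k = Dmul n a k - Dmul n b k"
  unfolding Dmul_def by (simp add: sum_subtractf algebra_simps)

lemma Dmul_neg: "Dmul n (\<lambda>j. - a j) k = - Dmul n a k"
  unfolding Dmul_def by (simp add: sum_negf)

lemma DTmul_diff: "DTmul n (\<lambda>j. a j - b j) k = DTmul n a k - DTmul n b k"
  unfolding DTmul_def by (simp add: sum_subtractf algebra_simps)

lemma abs_step:
  fixes a b t :: real
  assumes "t \<ge> 0" "a \<noteq> 0 \<Longrightarrow> t * \<bar>b\<bar> < \<bar>a\<bar>"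
  shows "\<bar>a + t*b\<bar> = \<bar>a\<bar> + t * ((if a \<noteq> 0 then sgn a else sgn b) * b)"
proof (cases "a = 0")
  case True
  have "sgn b * b = \<bar>b\<bar>" by (simp add: sgn_if)
  then show ?thesis using True assms(1) by (simp add: abs_mult)
next
  case False
  then have "t * \<bar>b\<bar> < \<bar>a\<bar>" using assms(2) by auto
  then have "\<bar>t*b\<bar> < \<bar>a\<bar>" using assms(1) by (simp add: abs_mult)
  then show ?thesis using False by (cases "a > 0") (auto simp: sgn_if abs_if)
qed

lemma quad_nonneg:
  fixes a c :: real
  assumes "c \<ge> 0" "\<And>e. 0 < e \<Longrightarrow> e \<le> 1 \<Longrightarrow> 0 \<le> 2*e*a + e^2*c"
  shows "a \<ge> 0"
proof (rule ccontr)
  assume "\<not> a \<ge> 0"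
  then have A: "a < 0" by simp
  define e where "e = min 1 (-a/(c+1))"
  have "0 < -a/(c+1)" using A assms(1) by (intro divide_pos_pos) auto
  then have s0: "0 < e" "e \<le> 1" by (auto simp: e_def)
  have "e * c \<le> -a"
  proof -
    have "e \<le> -a/(c+1)" by (simp add: e_def)
    then have "e*(c+1) \<le> (-a/(c+1))*(c+1)" using assms(1) by (intro mult_right_mono) auto
    also have "\<dots> = -a" using assms(1) by simp
    finally have "e*(c+1) \<le> -a" .
    then show ?thesis using s0 by (simp add: algebra_simps)
  qed
  then have "e*(e*c) \<le> e*(-a)" using s0 by (intro mult_left_mono) auto
  then have "e^2*c \<le> e*(-a)" by (simp add: power2_eq_square mult.assoc)
  moreover have "e*a < 0" using s0 A by (simp add: mult_pos_neg)
  ultimately have "2*e*a + e^2*c < 0" by linarith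
  with assms(2)[OF s0] show False by linarith
qed

lemma sq_aux: fixes t d :: real assumes "0 < t" "t + d \<le> 0" shows "(t+d)^2 \<le> d^2"
proof -
  have "t*(t+2*d) \<le> 0" using assms by (intro mult_nonneg_nonpos) auto
  then show ?thesis by (simp add: power2_eq_square algebra_simps)
qed

lemma phi_min: fixes t d :: real
  shows "(min (t+d) 0)^2 \<le> (min t 0)^2 + 2*(min t 0)*d + d^2"
proof -
  have "(min (t+d) 0)^2 \<le> (min t 0 + d)^2"
  proof (cases "t \<le> 0")
    case True then show ?thesis
      by (cases "t + d \<le> 0") (auto simp: min_def)
  next
    case False then show ?thesis using sq_aux[of t d]
      by (cases "t + d \<le> 0") (auto simp: min_def)
  qed
  then show ?thesis by (simp add: power2_eq_square algebra_simps)
qed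

lemma phi_max: fixes t d :: real
  shows "(max (t+d) 0)^2 \<le> (max t 0)^2 + 2*(max t 0)*d + d^2"
proof -
  have "(max (t+d) 0)^2 \<le> (max t 0 + d)^2"
  proof (cases "t \<ge> 0")
    case True then show ?thesis
      by (cases "t + d \<ge> 0") (auto simp: max_def)
  next
    case False then show ?thesis using sq_aux[of "-t" "-d"]
      by (cases "t + d \<ge> 0") (auto simp: max_def power2_eq_square algebra_simps)
  qed
  then show ?thesis by (simp add: power2_eq_square algebra_simps)
qed



lemma suff:
  assumes MN: "M \<subseteq> {1..n}" and feas: "feasible M y \<epsilon> z"
   and h1: "\<forall>j\<in>{1..n}. j \<notin> Aup \<and> j \<notin> Adown \<longrightarrow> DTmul n u j = 0"
   and h2: "\<forall>k\<in>{1..n-2}. Dmul n z k \<noteq> 0 \<longrightarrow> u k = sgn (Dmul n z k)"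
   and h3: "\<forall>k\<in>{1..n-2}. \<bar>u k\<bar> \<le> 1"
   and h4: "\<forall>j\<in>Aup. DTmul n u j \<ge> 0" and h5: "\<forall>j\<in>Adown. DTmul n u j \<le> 0"
   and Aup: "Aup = {i\<in>M. y i - z i = \<epsilon>}" and Adown: "Adown = {i\<in>M. y i - z i = -\<epsilon>}"
  shows "is_minimizer n M y \<epsilon> z"
proof -
  have "tv_obj n z \<le> tv_obj n z'" if f': "feasible M y \<epsilon> z'" for z'
  proof -
    have e1: "tv_obj n z = (\<Sum>k=1..n-2. u k * Dmul n z k)"
      unfolding tv_obj_def
    proof (rule sum.cong)
      fix k assume "k \<in> {1..n-2}"
      then show "\<bar>Dmul n z k\<bar> = u k * Dmul n z k" using h2
        by (cases "Dmul n z k = 0") (auto simp: sgn_if abs_if)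
    qed simp
    have e2: "(\<Sum>k=1..n-2. u k * Dmul n z' k) \<le> tv_obj n z'"
      unfolding tv_obj_def
    proof (rule sum_mono)
      fix k assume k: "k \<in> {1..n-2}"
      have "\<bar>u k * Dmul n z' k\<bar> \<le> \<bar>Dmul n z' k\<bar>"
        using h3 k by (simp add: abs_mult mult_left_le_one_le)
      then show "u k * Dmul n z' k \<le> \<bar>Dmul n z' k\<bar>" by linarith
    qed
    have e3: "(\<Sum>k=1..n-2. u k * Dmul n z' k) - (\<Sum>k=1..n-2. u k * Dmul n z k)
        = (\<Sum>j=1..n. (z' j - z j) * DTmul n u j)"
      using sum_Dmul_swap[of u n "\<lambda>j. z' j - z j"]
      by (simp add: Dmul_diff right_diff_distrib sum_subtractf)
    have e4: "0 \<le> (\<Sum>j=1..n. (z' j - z j) * DTmul n u j)"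
    proof (rule sum_nonneg)
      fix j assume j: "j \<in> {1..n}"
      show "0 \<le> (z' j - z j) * DTmul n u j"
      proof (cases "j \<in> Aup")
        case True
        then have "j \<in> M" "y j - z j = \<epsilon>" using Aup by auto
        then have "z' j - z j \<ge> 0" using f' unfolding feasible_def by fastforce
        then show ?thesis using h4 True by simp
      next
        case nA: False
        show ?thesis
        proof (cases "j \<in> Adown")
          case True
          then have "j \<in> M" "y j - z j = -\<epsilon>" using Adown by auto
          then have "z' j - z j \<le> 0" using f' unfolding feasible_def by fastforce
          then show ?thesis using h5 True by (simp add: mult_nonpos_nonpos)
        next
          case False then show ?thesis using h1 nA j by simp
        qed
      qed
    qed
    show ?thesis using e1 e2 e3 e4 by linarith
  qed
  then show ?thesis using feas unfolding is_minimizer_def by blast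
qed



lemma exists_min:
  fixes B :: "nat \<Rightarrow> real set" and g :: "nat \<Rightarrow> real \<Rightarrow> real" and c :: "nat \<Rightarrow> nat \<Rightarrow> real"
  assumes fK: "finite K" and BK: "\<forall>k\<in>K. compact (B k) \<and> B k \<noteq> {}"
    and gc: "\<And>j. continuous_on UNIV (g j)" and fN: "finite N"
  shows "\<exists>u\<in>PiE K B. \<forall>v\<in>PiE K B. (\<Sum>j\<in>N. g j (\<Sum>k\<in>K. c k j * u k)) \<le> (\<Sum>j\<in>N. g j (\<Sum>k\<in>K. c k j * v k))"
proof -
  define X where "X = product_topology (\<lambda>_::nat. euclideanreal) K"
  define f where "f u = (\<Sum>j\<in>N. g j (\<Sum>k\<in>K. c k j * u k))" for u :: "nat \<Rightarrow> real"
  have cpt: "compactin X (PiE K B)" unfolding X_def using BK by (simp add: compactin_PiE)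
  have lin: "continuous_map X euclideanreal (\<lambda>u. \<Sum>k\<in>K. c k j * u k)" for j
    unfolding X_def
    by (intro continuous_map_sum fK continuous_map_real_mult_left) (rule continuous_map_product_projection)
  have "continuous_map X euclideanreal (\<lambda>u. g j (\<Sum>k\<in>K. c k j * u k))" for j
    using continuous_map_compose[OF lin[of j], of euclideanreal "g j"] gc[of j] by (simp add: o_def)
  then have cont: "continuous_map X euclideanreal f"
    unfolding f_def by (intro continuous_map_sum fN)
  have "compact (f ` PiE K B)" using image_compactin[OF cpt cont] by simp
  moreover have "PiE K B \<noteq> {}" using BK by (simp add: PiE_eq_empty_iff)
  ultimately obtain m where "m \<in> f ` PiE K B" "\<forall>x\<in>f ` PiE K B. m \<le> x"
    using compact_attains_inf[of "f ` PiE K B"] by blast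
  then show ?thesis unfolding f_def by blast
qed



lemma nec:
  assumes MN: "M \<subseteq> {1..n}" and eps: "\<epsilon> > 0" and mini: "is_minimizer n M y \<epsilon> z"
   and Aup: "Aup = {i\<in>M. y i - z i = \<epsilon>}" and Adown: "Adown = {i\<in>M. y i - z i = -\<epsilon>}"
  shows "\<exists>u. (\<forall>j\<in>{1..n}. j \<notin> Aup \<and> j \<notin> Adown \<longrightarrow> DTmul n u j = 0) \<and>
   (\<forall>k\<in>{1..n-2}. Dmul n z k \<noteq> 0 \<longrightarrow> u k = sgn (Dmul n z k)) \<and>
   (\<forall>k\<in>{1..n-2}. \<bar>u k\<bar> \<le> 1) \<and>
   (\<forall>j\<in>Aup. DTmul n u j \<ge> 0) \<and> (\<forall>j\<in>Adown. DTmul n u j \<le> 0)"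
proof -
  define K where "K = {1..n-2::nat}"
  define N where "N = {1..n::nat}"
  define B where "B k = (if Dmul n z k \<noteq> 0 then {sgn (Dmul n z k)} else {-1..1::real})" for k
  define U where "U = PiE K B"
  define \<rho> where "\<rho> j t = (if j\<in>Aup then min t 0 else if j\<in>Adown then max t 0 else t)" for j and t::real
  define h where "h u = (\<Sum>j\<in>N. (\<rho> j (DTmul n u j))^2)" for u
  have feas: "feasible M y \<epsilon> z" and minz: "\<And>z'. feasible M y \<epsilon> z' \<Longrightarrow> tv_obj n z \<le> tv_obj n z'"
    using mini unfolding is_minimizer_def by auto
  have disj: "j \<in> Aup \<Longrightarrow> j \<notin> Adown" for j using Aup Adown eps by auto
  have DT: "DTmul n u j = (\<Sum>k\<in>K. Dent k j * u k)" for u j unfolding DTmul_def K_def by simp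
  have gc: "continuous_on UNIV (\<lambda>t. (\<rho> j t)^2)" for j
    unfolding \<rho>_def by (cases "j \<in> Aup"; cases "j \<in> Adown") (auto intro!: continuous_intros)
  have bk: "\<forall>k\<in>K. compact (B k) \<and> B k \<noteq> {}" by (simp add: B_def)
  have "\<exists>u\<in>U. \<forall>v\<in>U. h u \<le> h v"
    using exists_min[where K=K and B=B and N=N and g="\<lambda>j t. (\<rho> j t)^2" and c=Dent, OF _ bk gc]
    unfolding U_def h_def DT by (simp add: K_def N_def)
  then obtain u where uU: "u \<in> U" and umin: "\<And>v. v \<in> U \<Longrightarrow> h u \<le> h v" by blast
  have uB: "k \<in> K \<Longrightarrow> u k \<in> B k" for k using uU unfolding U_def by auto
  have ucond: "(\<forall>k\<in>{1..n-2}. Dmul n z k \<noteq> 0 \<longrightarrow> u k = sgn (Dmul n z k)) \<and> (\<forall>k\<in>{1..n-2}. \<bar>u k\<bar> \<le> 1)"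
    using uB unfolding K_def B_def by (force simp: sgn_if split: if_splits)
  have hnn: "0 \<le> h u" unfolding h_def by (simp add: sum_nonneg)
  show ?thesis
  proof (cases "h u = 0")
    case True
    then have "\<forall>j\<in>N. (\<rho> j (DTmul n u j))^2 = 0"
      unfolding h_def N_def by (subst (asm) sum_nonneg_eq_0_iff) auto
    then have z: "\<forall>j\<in>N. \<rho> j (DTmul n u j) = 0" by simp
    have "(\<forall>j\<in>{1..n}. j \<notin> Aup \<and> j \<notin> Adown \<longrightarrow> DTmul n u j = 0) \<and>
      (\<forall>j\<in>Aup. DTmul n u j \<ge> 0) \<and> (\<forall>j\<in>Adown. DTmul n u j \<le> 0)"
    proof (intro conjI ballI impI)
      fix j assume j: "j \<in> {1..n}" "j \<notin> Aup \<and> j \<notin> Adown"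
      then have "\<rho> j (DTmul n u j) = 0" using z unfolding N_def by blast
      then show "DTmul n u j = 0" using j unfolding \<rho>_def by simp
    next
      fix j assume j: "j \<in> Aup"
      then have "j \<in> N" using Aup MN unfolding N_def by auto
      then show "DTmul n u j \<ge> 0" using z j unfolding \<rho>_def by (auto simp: min_def split: if_splits)
    next
      fix j assume j: "j \<in> Adown"
      then have "j \<in> N" using Adown MN unfolding N_def by auto
      then show "DTmul n u j \<le> 0" using z j disj unfolding \<rho>_def by (auto simp: max_def split: if_splits)
    qed
    then show ?thesis using ucond by blast
  next
    case False
    then have hpos: "h u > 0" using hnn by simp
    have phi: "(\<rho> j (t+d))^2 \<le> (\<rho> j t)^2 + 2*(\<rho> j t)*d + d^2" for j t d
      unfolding \<rho>_def using phi_min[of t d] phi_max[of t d] by (auto simp: power2_sum)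
    define r where "r j = \<rho> j (DTmul n u j)" for j
    have swap: "(\<Sum>k\<in>K. v k * Dmul n w k) = (\<Sum>j\<in>N. w j * DTmul n v j)" for v w
      using sum_Dmul_swap[of v n w] unfolding K_def N_def by simp
    have rt: "\<rho> j t * t = (\<rho> j t)^2" for j t
      unfolding \<rho>_def by (auto simp: min_def max_def power2_eq_square)
    have hu_eq: "h u = (\<Sum>k\<in>K. u k * Dmul n r k)"
      unfolding swap h_def r_def by (simp add: rt)
    have opt: "(\<Sum>k\<in>K. u k * Dmul n r k) \<le> (\<Sum>k\<in>K. v k * Dmul n r k)" if vU: "v \<in> U" for v
    proof -
      define AA where "AA = (\<Sum>j\<in>N. r j * DTmul n (\<lambda>k. v k - u k) j)"
      define CC where "CC = (\<Sum>j\<in>N. (DTmul n (\<lambda>k. v k - u k) j)^2)"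
      have "0 \<le> 2*e*AA + e^2*CC" if e: "0 < e" "e \<le> 1" for e
      proof -
        define w where "w = restrict (\<lambda>k. u k + e*(v k - u k)) K"
        have vB: "k \<in> K \<Longrightarrow> v k \<in> B k" for k using vU unfolding U_def by auto
        have "w k \<in> B k" if k: "k \<in> K" for k
        proof (cases "Dmul n z k \<noteq> 0")
          case True then show ?thesis using uB[OF k] vB[OF k] k unfolding w_def B_def by simp
        next
          case False
          then have "u k \<in> {-1..1}" "v k \<in> {-1..1}" using uB[OF k] vB[OF k] unfolding B_def by auto
          then have uk: "-1 \<le> u k" "u k \<le> 1" and vk: "-1 \<le> v k" "v k \<le> 1" by auto
          have "(1-e)*u k \<le> 1-e" using mult_left_mono[of "u k" 1 "1-e"] e uk by simp
          moreover have "-(1-e) \<le> (1-e)*u k" using mult_left_mono[of "-1" "u k" "1-e"] e uk by simp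
          moreover have "e * v k \<le> e" using mult_left_mono[of "v k" 1 e] e vk by simp
          moreover have "-e \<le> e * v k" using mult_left_mono[of "-1" "v k" e] e vk by simp
          moreover have "u k + e*(v k - u k) = (1-e)*u k + e * v k" by (simp add: algebra_simps)
          ultimately have "-1 \<le> u k + e*(v k - u k) \<and> u k + e*(v k - u k) \<le> 1" by linarith
          then show ?thesis using False k unfolding w_def B_def by simp
        qed
        then have wU: "w \<in> U" unfolding U_def w_def by auto
        have DTw: "DTmul n w j = DTmul n u j + e * DTmul n (\<lambda>k. v k - u k) j" for j
        proof -
          have "(\<Sum>k\<in>K. Dent k j * w k) = (\<Sum>k\<in>K. Dent k j * u k + e * (Dent k j * (v k - u k)))"
            by (rule sum.cong) (auto simp: w_def algebra_simps)
          then show ?thesis unfolding DT by (simp add: sum.distrib sum_distrib_left)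
        qed
        have "h w \<le> (\<Sum>j\<in>N. (\<rho> j (DTmul n u j))^2 + 2*(r j)*(e * DTmul n (\<lambda>k. v k - u k) j) + (e * DTmul n (\<lambda>k. v k - u k) j)^2)"
          unfolding h_def DTw
        proof (rule sum_mono)
          fix j
          show "(\<rho> j (DTmul n u j + e * DTmul n (\<lambda>k. v k - u k) j))\<^sup>2
            \<le> (\<rho> j (DTmul n u j))\<^sup>2 + 2 * r j * (e * DTmul n (\<lambda>k. v k - u k) j) + (e * DTmul n (\<lambda>k. v k - u k) j)\<^sup>2"
            unfolding r_def by (rule phi)
        qed
        also have "\<dots> = h u + 2*e*AA + e^2*CC"
          unfolding h_def AA_def CC_def
          by (simp add: sum.distrib sum_distrib_left power_mult_distrib algebra_simps)
        finally have "h w \<le> h u + 2*e*AA + e^2*CC" .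
        with umin[OF wU] show ?thesis by linarith
      qed
      then have "AA \<ge> 0" by (intro quad_nonneg[of CC AA]) (auto simp: CC_def intro: sum_nonneg)
      moreover have "AA = (\<Sum>k\<in>K. v k * Dmul n r k) - (\<Sum>k\<in>K. u k * Dmul n r k)"
        unfolding AA_def swap by (simp add: DTmul_diff right_diff_distrib sum_subtractf)
      ultimately show ?thesis by linarith
    qed
    define dd where "dd j = - r j" for j
    define v where "v = restrict (\<lambda>k. if Dmul n z k \<noteq> 0 then sgn (Dmul n z k) else sgn (Dmul n dd k)) K"
    have vU: "v \<in> U" unfolding U_def v_def B_def by (auto simp: sgn_if)
    have Ddd: "Dmul n dd k = - Dmul n r k" for k unfolding dd_def by (rule Dmul_neg)
    have key: "(\<Sum>k\<in>K. v k * Dmul n dd k) < 0"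
    proof -
      have "(\<Sum>k\<in>K. v k * Dmul n dd k) = - (\<Sum>k\<in>K. v k * Dmul n r k)" by (simp add: Ddd sum_negf)
      then show ?thesis using opt[OF vU] hu_eq hpos by linarith
    qed
    have fM: "finite M" using MN finite_subset by blast
    define S where "S = insert \<epsilon> ((\<lambda>i. \<epsilon> - \<bar>z i - y i\<bar>) ` {i\<in>M. \<bar>z i - y i\<bar> < \<epsilon>} \<union> (\<lambda>k. \<bar>Dmul n z k\<bar>) ` {k\<in>K. Dmul n z k \<noteq> 0})"
    have fS: "finite S" unfolding S_def K_def using fM by auto
    have Spos: "\<forall>x\<in>S. x > 0" unfolding S_def using eps by auto
    define \<delta> where "\<delta> = Min S"
    have dpos: "\<delta> > 0" unfolding \<delta>_def using fS Spos by (subst Min_gr_iff) (auto simp: S_def)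
    have dle: "x \<in> S \<Longrightarrow> \<delta> \<le> x" for x unfolding \<delta>_def using fS by simp
    define Bd where "Bd = 1 + (\<Sum>i\<in>N. \<bar>dd i\<bar>) + (\<Sum>k\<in>K. \<bar>Dmul n dd k\<bar>)"
    have s1: "0 \<le> (\<Sum>i\<in>N. \<bar>dd i\<bar>)" "0 \<le> (\<Sum>k\<in>K. \<bar>Dmul n dd k\<bar>)" by (auto intro: sum_nonneg)
    then have Bdpos: "Bd > 0" unfolding Bd_def by linarith
    define t where "t = \<delta> / (2*Bd)"
    have tpos: "t > 0" unfolding t_def using dpos Bdpos by simp
    have tBd: "t * Bd = \<delta>/2" unfolding t_def using Bdpos by simp
    have ddb: "t * \<bar>dd i\<bar> < \<delta>/2" if iN: "i \<in> N" for i
    proof -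
      have "\<bar>dd i\<bar> \<le> (\<Sum>i\<in>N. \<bar>dd i\<bar>)" using iN by (intro member_le_sum) (auto simp: N_def)
      then have "\<bar>dd i\<bar> < Bd" using s1 unfolding Bd_def by linarith
      then have "t * \<bar>dd i\<bar> < t * Bd" using tpos by simp
      then show ?thesis using tBd by simp
    qed
    have Ddb: "t * \<bar>Dmul n dd k\<bar> < \<delta>/2" if kK: "k \<in> K" for k
    proof -
      have "\<bar>Dmul n dd k\<bar> \<le> (\<Sum>k\<in>K. \<bar>Dmul n dd k\<bar>)" using kK by (intro member_le_sum) (auto simp: K_def)
      then have "\<bar>Dmul n dd k\<bar> < Bd" using s1 unfolding Bd_def by linarith
      then have "t * \<bar>Dmul n dd k\<bar> < t * Bd" using tpos by simp
      then show ?thesis using tBd by simp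
    qed
    have dle_eps: "\<delta> \<le> \<epsilon>" using dle unfolding S_def by auto
    define z' where "z' i = z i + t * dd i" for i
    have feas': "feasible M y \<epsilon> z'"
      unfolding feasible_def
    proof
      fix i assume i: "i \<in> M"
      then have iN: "i \<in> N" using MN N_def by auto
      have zi: "\<bar>z i - y i\<bar> \<le> \<epsilon>" using feas i unfolding feasible_def by auto
      have b: "t * \<bar>dd i\<bar> < \<delta>/2" using ddb iN .
      have eq: "z' i - y i = (z i - y i) + t * dd i" unfolding z'_def by simp
      have tabs: "\<bar>t * dd i\<bar> = t * \<bar>dd i\<bar>" using tpos by (simp add: abs_mult)
      show "\<bar>z' i - y i\<bar> \<le> \<epsilon>"
      proof (cases "\<bar>z i - y i\<bar> < \<epsilon>")
        case True
        then have "\<delta> \<le> \<epsilon> - \<bar>z i - y i\<bar>" using dle i unfolding S_def by auto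
        moreover have "\<bar>z' i - y i\<bar> \<le> \<bar>z i - y i\<bar> + \<bar>t * dd i\<bar>" unfolding eq by (rule abs_triangle_ineq)
        ultimately show ?thesis using b dpos tabs by linarith
      next
        case False
        then have "y i - z i = \<epsilon> \<or> y i - z i = -\<epsilon>" using zi by auto
        then show ?thesis
        proof
          assume a: "y i - z i = \<epsilon>"
          then have "i \<in> Aup" using Aup i by auto
          then have "r i \<le> 0" unfolding r_def \<rho>_def by simp
          then have "dd i \<ge> 0" unfolding dd_def by simp
          then have "0 \<le> t * dd i" "t * dd i < \<delta>/2" using tpos b by auto
          then show ?thesis using a eq dle_eps by (simp add: abs_le_iff)
        next
          assume a: "y i - z i = -\<epsilon>"
          then have "i \<in> Adown" using Adown i by auto
          then have "r i \<ge> 0" using disj unfolding r_def \<rho>_def by auto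
          then have "dd i \<le> 0" unfolding dd_def by simp
          then have "t * dd i \<le> 0" "- (t * dd i) < \<delta>/2" using tpos b by (auto simp: mult_nonneg_nonpos abs_if split: if_splits)
          then show ?thesis using a eq dle_eps by (simp add: abs_le_iff)
        qed
      qed
    qed
    have "tv_obj n z' = tv_obj n z + t * (\<Sum>k\<in>K. v k * Dmul n dd k)"
    proof -
      have "tv_obj n z' = (\<Sum>k\<in>K. \<bar>Dmul n z k + t * Dmul n dd k\<bar>)"
        unfolding tv_obj_def z'_def K_def by (simp add: Dmul_lin)
      also have "\<dots> = (\<Sum>k\<in>K. \<bar>Dmul n z k\<bar> + t * (v k * Dmul n dd k))"
      proof (rule sum.cong)
        fix k assume k: "k \<in> K"
        have "Dmul n z k \<noteq> 0 \<Longrightarrow> t * \<bar>Dmul n dd k\<bar> < \<bar>Dmul n z k\<bar>"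
        proof -
          assume "Dmul n z k \<noteq> 0"
          then have "\<delta> \<le> \<bar>Dmul n z k\<bar>" using dle k unfolding S_def by auto
          then show ?thesis using Ddb[OF k] dpos by linarith
        qed
        then show "\<bar>Dmul n z k + t * Dmul n dd k\<bar> = \<bar>Dmul n z k\<bar> + t * (v k * Dmul n dd k)"
          using abs_step[of t "Dmul n z k" "Dmul n dd k"] tpos k unfolding v_def by simp
      qed simp
      also have "\<dots> = tv_obj n z + t * (\<Sum>k\<in>K. v k * Dmul n dd k)"
        unfolding tv_obj_def K_def by (simp add: sum.distrib sum_distrib_left)
      finally show ?thesis .
    qed
    moreover have "t * (\<Sum>k\<in>K. v k * Dmul n dd k) < 0" using tpos key by (simp add: mult_pos_neg)
    ultimately have "tv_obj n z' < tv_obj n z" by linarith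
    with minz[OF feas'] have False by linarith
    then show ?thesis ..
  qed
qed


theorem proposition7:
  fixes n :: nat and M :: "nat set" and y zd eta z :: "nat \<Rightarrow> real" and \<epsilon> :: real
  assumes "n \<ge> 3"
    and "M \<subseteq> {1..n}"
    and "\<forall>i\<in>M. y i = zd i + eta i"
    and "\<forall>i\<in>M. \<bar>eta i\<bar> \<le> \<epsilon>"
    and "\<epsilon> > 0"
    and "feasible M y \<epsilon> z"
  shows "is_minimizer n M y \<epsilon> z \<longleftrightarrow>
    (let Act = {i\<in>M. \<bar>y i - z i\<bar> = \<epsilon>};
         Aup = {i\<in>M. y i - z i = \<epsilon>};
         Adown = {i\<in>M. y i - z i = - \<epsilon>};
         Abar = M - Act;
         Mbar = {1..n} - M;
         I = {k\<in>{1..n - 2}. Dmul n z k \<noteq> 0}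
     in \<exists>u :: nat \<Rightarrow> real.
          (\<forall>j\<in>Mbar \<union> Abar. DTmul n u j = 0) \<and>
          (\<forall>k\<in>I. u k = sgn (Dmul n z k)) \<and>
          (\<forall>k\<in>{1..n - 2}. \<bar>u k\<bar> \<le> 1) \<and>
          (\<forall>j\<in>Aup. DTmul n u j \<ge> 0) \<and>
          (\<forall>j\<in>Adown. DTmul n u j \<le> 0))"
proof -
  define Aup where "Aup = {i\<in>M. y i - z i = \<epsilon>}"
  define Adown where "Adown = {i\<in>M. y i - z i = - \<epsilon>}"
  have MN: "M \<subseteq> {1..n}" and eps: "\<epsilon> > 0" and feas: "feasible M y \<epsilon> z" using assms by auto
  have ab: "\<bar>a\<bar> = \<epsilon> \<longleftrightarrow> a = \<epsilon> \<or> a = - \<epsilon>" for a :: real using eps by auto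
  have c1: "(\<forall>j\<in>({1..n} - M) \<union> (M - {i\<in>M. \<bar>y i - z i\<bar> = \<epsilon>}). DTmul n u j = 0)
     \<longleftrightarrow> (\<forall>j\<in>{1..n}. j \<notin> Aup \<and> j \<notin> Adown \<longrightarrow> DTmul n u j = 0)" for u
    using MN unfolding Aup_def Adown_def ab by auto
  have c2: "(\<forall>k\<in>{k\<in>{1..n - 2}. Dmul n z k \<noteq> 0}. u k = sgn (Dmul n z k))
     \<longleftrightarrow> (\<forall>k\<in>{1..n-2}. Dmul n z k \<noteq> 0 \<longrightarrow> u k = sgn (Dmul n z k))" for u by auto
  show ?thesis
    unfolding Let_def c1 c2
  proof
    assume "is_minimizer n M y \<epsilon> z"
    from nec[OF MN eps this Aup_def Adown_def] show "\<exists>u. (\<forall>j\<in>{1..n}. j \<notin> Aup \<and> j \<notin> Adown \<longrightarrow> DTmul n u j = 0) \<and>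
     (\<forall>k\<in>{1..n-2}. Dmul n z k \<noteq> 0 \<longrightarrow> u k = sgn (Dmul n z k)) \<and>
     (\<forall>k\<in>{1..n - 2}. \<bar>u k\<bar> \<le> 1) \<and>
     (\<forall>j\<in>{i\<in>M. y i - z i = \<epsilon>}. 0 \<le> DTmul n u j) \<and> (\<forall>j\<in>{i\<in>M. y i - z i = - \<epsilon>}. DTmul n u j \<le> 0)"
      unfolding Aup_def Adown_def by simp
  next
    assume "\<exists>u. (\<forall>j\<in>{1..n}. j \<notin> Aup \<and> j \<notin> Adown \<longrightarrow> DTmul n u j = 0) \<and>
     (\<forall>k\<in>{1..n-2}. Dmul n z k \<noteq> 0 \<longrightarrow> u k = sgn (Dmul n z k)) \<and>
     (\<forall>k\<in>{1..n - 2}. \<bar>u k\<bar> \<le> 1) \<and>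
     (\<forall>j\<in>{i\<in>M. y i - z i = \<epsilon>}. 0 \<le> DTmul n u j) \<and> (\<forall>j\<in>{i\<in>M. y i - z i = - \<epsilon>}. DTmul n u j \<le> 0)"
    then obtain u where "(\<forall>j\<in>{1..n}. j \<notin> Aup \<and> j \<notin> Adown \<longrightarrow> DTmul n u j = 0)"
      "(\<forall>k\<in>{1..n-2}. Dmul n z k \<noteq> 0 \<longrightarrow> u k = sgn (Dmul n z k))"
      "(\<forall>k\<in>{1..n - 2}. \<bar>u k\<bar> \<le> 1)"
      "(\<forall>j\<in>Aup. 0 \<le> DTmul n u j)" "(\<forall>j\<in>Adown. DTmul n u j \<le> 0)"
      unfolding Aup_def Adown_def by blast
    then show "is_minimizer n M y \<epsilon> z" using suff[OF MN feas _ _ _ _ _ Aup_def Adown_def] by blast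
  qed
qed

end
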